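(* Let $A,B,C$ be positive semidefinite complex matrices of the same order. Then \[ \det(A+B+C)+\det C\ge \det(A+C)+\det(B+C). \] *)

theory Defs
  imports "HOL-Analysis.Analysis" "HOL-Library.Complex_Order"
begin

definition hermitian_mat :: "complex ^'n ^'n \<Rightarrow> bool" where
  "hermitian_mat A \<longleftrightarrow> (\<forall>i j. A $ i $ j = cnj (A $ j $ i))"

definition psd_mat :: "complex ^'n ^'n \<Rightarrow> bool" where
  "psd_mat A \<longleftrightarrow> hermitian_mat A \<and>
     (\<forall>x :: complex ^'n. (\<Sum>i\<in>UNIV. \<Sum>j\<in>UNIV. cnj (x $ i) * A $ i $ j * x $ j) \<ge> 0)"

end

theory Submission
  imports Defs
begin
definition outer :: "complex^'n \<Rightarrow> complex^'n^'n" where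
  "outer v = (\<chi> i j. v$i * cnj (v$j))"

definition cv :: "complex^'n \<Rightarrow> complex^'n" where
  "cv v = (\<chi> j. cnj (v$j))"

lemma det_cnj_rows: "det (\<chi> i. cv (u i)) = cnj (det (\<chi> i. u i :: complex^'n^'n))"
  unfolding det_def cv_def by simp

lemma reindex_comp_perm:
  assumes t: "t permutes (UNIV::'n::finite set)"
  shows "(\<Sum>f\<in>{f. \<forall>i. f i \<in> K}. H (f \<circ> t)) = (\<Sum>f\<in>{f::'n\<Rightarrow>'k. \<forall>i. f i \<in> K}. (H f :: complex))"
proof (rule sum.reindex_bij_witness[where i="\<lambda>f. f \<circ> inv t" and j="\<lambda>f. f \<circ> t"])
  fix f show "f \<circ> inv t \<circ> t = f" using permutes_inverses(2)[OF t] by (auto simp: fun_eq_iff)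
next
  fix f show "f \<circ> t \<circ> inv t = f" using permutes_inverses(1)[OF t] by (auto simp: fun_eq_iff)
qed auto

lemma det_linear_rows_sum_lemma_gen:
  fixes S :: "'k set"
  assumes fS: "finite S"
    and fT: "finite T"
  shows "det ((\<chi> i. if i \<in> T then sum (a i) S else c i):: 'a::comm_ring_1^'n^'n) =
    sum (\<lambda>f. det((\<chi> i. if i \<in> T then a i (f i) else c i)::'a^'n^'n))
      {f. (\<forall>i \<in> T. f i \<in> S) \<and> (\<forall>i. i \<notin> T \<longrightarrow> f i = undefined)}"
  using fT
proof (induct T arbitrary: a c set: finite)
  case empty
  have th0: "\<And>x y. (\<chi> i. if i \<in> {} then x i else y i) = (\<chi> i. y i)"
    by vector
  have th1: "{f::'n\<Rightarrow>'k. (\<forall>i \<in> {}. f i \<in> S) \<and> (\<forall>i. i \<notin> {} \<longrightarrow> f i = undefined)} = {\<lambda>_. undefined}"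
    by auto
  show ?case
    unfolding th0 th1 by simp
next
  case (insert z T a c)
  let ?F = "\<lambda>T. {f::'n\<Rightarrow>'k. (\<forall>i \<in> T. f i \<in> S) \<and> (\<forall>i. i \<notin> T \<longrightarrow> f i = undefined)}"
  let ?h = "\<lambda>(y,g) i. if i = z then y else g i"
  let ?k = "\<lambda>h. (h(z),(\<lambda>i. if i = z then undefined else h i))"
  have thif: "\<And>a b c d. (if a \<or> b then c else d) = (if a then c else if b then c else d)"
    by simp
  have thif2: "\<And>a b c d e. (if a then b else if c then d else e) =
     (if c then (if a then b else d) else (if a then b else e))"
    by simp
  from \<open>z \<notin> T\<close> have nz: "\<And>i. i \<in> T \<Longrightarrow> i \<noteq> z"
    by auto
  have "det (\<chi> i. if i \<in> insert z T then sum (a i) S else c i) =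
    det (\<chi> i. if i = z then sum (a i) S else if i \<in> T then sum (a i) S else c i)"
    unfolding insert_iff thif ..
  also have "\<dots> = (\<Sum>j\<in>S. det (\<chi> i. if i \<in> T then sum (a i) S else if i = z then a i j else c i))"
    unfolding det_linear_row_sum[OF fS]
    by (subst thif2) (simp add: nz cong: if_cong)
  finally have tha:
    "det (\<chi> i. if i \<in> insert z T then sum (a i) S else c i) =
     (\<Sum>(j, f)\<in>S \<times> ?F T. det (\<chi> i. if i \<in> T then a i (f i)
                                else if i = z then a i j
                                else c i))"
    unfolding insert.hyps unfolding sum.cartesian_product by blast
  show ?case unfolding tha
    using \<open>z \<notin> T\<close>
    by (intro sum.reindex_bij_witness[where i="?k" and j="?h"])
       (auto intro!: cong[OF refl[of det]] simp: vec_eq_iff)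
qed

lemma det_linear_rows_sum_gen:
  fixes S :: "'k set"
  assumes fS: "finite S"
  shows "det (\<chi> i. sum (a i) S) =
    sum (\<lambda>f. det (\<chi> i. a i (f i) :: 'a::comm_ring_1 ^ 'n^'n)) {f. \<forall>i. f i \<in> S}"
proof -
  have th0: "\<And>x y. ((\<chi> i. if i \<in> (UNIV:: 'n set) then x i else y i) :: 'a^'n^'n) = (\<chi> i. x i)"
    by vector
  from det_linear_rows_sum_lemma_gen[OF fS, of "UNIV :: 'n set" a, unfolded th0, OF finite]
  show ?thesis by simp
qed

lemma gram_det:
  fixes w :: "'k \<Rightarrow> complex^'n"
  assumes K: "finite K"
  shows "of_nat (fact CARD('n)) * det (\<Sum>k\<in>K. outer (w k))
       = (\<Sum>f\<in>{f. \<forall>i. f i \<in> K}. det (\<chi> i. w (f i)) * cnj (det (\<chi> i. w (f i))))"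
proof -
  define F where "F = {f::'n\<Rightarrow>'k. \<forall>i. f i \<in> K}"
  define P where "P f = (\<Prod>i\<in>UNIV. w (f i) $ i)" for f :: "'n \<Rightarrow> 'k"
  define Q where "Q f = det (\<chi> i. w (f i))" for f :: "'n \<Rightarrow> 'k"
  define S where "S = {t. t permutes (UNIV::'n set)}"
  have G: "(\<Sum>k\<in>K. outer (w k)) = (\<chi> i. \<Sum>k\<in>K. (w k $ i) *s cv (w k))"
    by (simp add: vec_eq_iff outer_def cv_def)
  have dG: "det (\<Sum>k\<in>K. outer (w k)) = (\<Sum>f\<in>F. P f * cnj (Q f))"
    unfolding G det_linear_rows_sum_gen[OF K] F_def
    by (rule sum.cong, simp, simp add: det_rows_mul P_def Q_def det_cnj_rows)
  have Qexp: "Q f = (\<Sum>t\<in>S. of_int (sign t) * P (f \<circ> t))" for f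
  proof -
    have "Q f = det (transpose (\<chi> i. w (f i)))" unfolding Q_def by simp
    then show ?thesis unfolding det_def S_def P_def by (simp add: transpose_def)
  qed
  have Qperm: "Q (f \<circ> t) = of_int (sign t) * Q f" if "t \<in> S" for f t
  proof -
    have "Q (f \<circ> t) = det (\<chi> i. (\<chi> i. w (f i)) $ t i)" unfolding Q_def by simp
    also have "\<dots> = of_int (sign t) * Q f" unfolding Q_def
      by (rule det_permute_rows) (use that in \<open>simp add: S_def\<close>)
    finally show ?thesis .
  qed
  have inner: "(\<Sum>f\<in>F. of_int (sign t) * P (f \<circ> t) * cnj (Q f)) = (\<Sum>f\<in>F. P f * cnj (Q f))"
    if t: "t \<in> S" for t
  proof -
    have "(\<Sum>f\<in>F. of_int (sign t) * P (f \<circ> t) * cnj (Q f)) = (\<Sum>f\<in>F. P (f \<circ> t) * cnj (Q (f \<circ> t)))"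
    proof (rule sum.cong)
      fix f
      have "cnj (Q (f \<circ> t)) = of_int (sign t) * cnj (Q f)" using Qperm[OF t] by simp
      moreover have "(of_int (sign t) :: complex) * of_int (sign t) = 1"
        by (metis of_int_1 of_int_mult sign_idempotent)
      ultimately show "of_int (sign t) * P (f \<circ> t) * cnj (Q f) = P (f \<circ> t) * cnj (Q (f \<circ> t))"
        by (metis (no_types, lifting) mult.assoc mult.commute mult.left_neutral)
    qed simp
    also have "\<dots> = (\<Sum>f\<in>F. P f * cnj (Q f))"
      unfolding F_def by (rule reindex_comp_perm[where H="\<lambda>f. P f * cnj (Q f)"]) (use t in \<open>simp add: S_def\<close>)
    finally show ?thesis .
  qed
  have "(\<Sum>f\<in>F. Q f * cnj (Q f)) = (\<Sum>f\<in>F. \<Sum>t\<in>S. of_int (sign t) * P (f \<circ> t) * cnj (Q f))"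
    by (simp add: Qexp sum_distrib_right)
  also have "\<dots> = (\<Sum>t\<in>S. \<Sum>f\<in>F. of_int (sign t) * P (f \<circ> t) * cnj (Q f))"
    by (rule sum.swap)
  also have "\<dots> = (\<Sum>t\<in>S. \<Sum>f\<in>F. P f * cnj (Q f))"
    by (rule sum.cong) (auto simp: inner)
  also have "\<dots> = of_nat (card S) * det (\<Sum>k\<in>K. outer (w k))"
    by (simp add: dG)
  also have "card S = fact CARD('n)"
    unfolding S_def by (rule card_permutations) auto
  finally show ?thesis unfolding F_def Q_def by simp
qed

definition qf :: "complex^'n^'n \<Rightarrow> complex^'n \<Rightarrow> complex^'n \<Rightarrow> complex" where
  "qf A x y = (\<Sum>i\<in>UNIV. \<Sum>j\<in>UNIV. cnj (x $ i) * A $ i $ j * y $ j)"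

lemma psd_qf: "psd_mat A \<longleftrightarrow> hermitian_mat A \<and> (\<forall>x. qf A x x \<ge> 0)"
  unfolding psd_mat_def qf_def ..

lemma qf_add_left: "qf A (x + y) z = qf A x z + qf A y z"
  by (simp add: qf_def algebra_simps sum.distrib)
lemma qf_add_right: "qf A z (x + y) = qf A z x + qf A z y"
  by (simp add: qf_def algebra_simps sum.distrib)
lemma qf_diff_left: "qf A (x - y) z = qf A x z - qf A y z"
  by (simp add: qf_def algebra_simps sum_subtractf)
lemma qf_diff_right: "qf A z (x - y) = qf A z x - qf A z y"
  by (simp add: qf_def algebra_simps sum_subtractf)
lemma qf_scale_left: "qf A (c *s x) z = cnj c * qf A x z"
  by (simp add: qf_def algebra_simps sum_distrib_left)
lemma qf_scale_right: "qf A z (c *s x) = c * qf A z x"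
  by (simp add: qf_def algebra_simps sum_distrib_left)
lemma qf_mat_diff: "qf (A - B) x y = qf A x y - qf B x y"
  by (simp add: qf_def algebra_simps sum_subtractf)

lemma qf_axis_left: "qf A (axis i 1) y = (\<Sum>j\<in>UNIV. A$i$j * y$j)"
proof -
  have "\<And>k. (\<Sum>j\<in>UNIV. cnj ((axis i 1)$k) * A$k$j * y$j) = (if k = i then (\<Sum>j\<in>UNIV. A$i$j * y$j) else 0)"
    by (auto simp: axis_def)
  then show ?thesis unfolding qf_def by simp
qed
lemma qf_axis_right: "qf A x (axis j 1) = (\<Sum>i\<in>UNIV. cnj (x$i) * A$i$j)"
proof -
  have "\<And>k. (\<Sum>l\<in>UNIV. cnj (x$k) * A$k$l * (axis j 1)$l) = cnj (x$k) * A$k$j"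
  proof -
    fix k
    have "\<And>l. cnj (x$k) * A$k$l * (axis j 1)$l = (if l = j then cnj (x$k) * A$k$j else 0)"
      by (auto simp: axis_def)
    then show "(\<Sum>l\<in>UNIV. cnj (x$k) * A$k$l * (axis j 1)$l) = cnj (x$k) * A$k$j" by simp
  qed
  then show ?thesis unfolding qf_def by simp
qed
lemma qf_axis_both: "qf A (axis i 1) (axis j 1) = A$i$j"
proof -
  have "\<And>l. A$i$l * (axis j 1)$l = (if l = j then A$i$j else 0)"
    by (auto simp: axis_def)
  then show ?thesis unfolding qf_axis_left by simp
qed

definition ip :: "complex^'n \<Rightarrow> complex^'n \<Rightarrow> complex" where
  "ip v x = (\<Sum>k\<in>UNIV. cnj (v$k) * x$k)"

lemma qf_outer: "qf (outer v) x y = cnj (ip v x) * ip v y"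
  apply (simp add: qf_def outer_def ip_def sum_distrib_left sum_distrib_right algebra_simps)
  apply (rule sum.swap)
  done

lemma psd_diag: "psd_mat A \<Longrightarrow> A$i$i \<ge> 0"
  using qf_axis_both[of A i i] unfolding psd_qf by metis

lemma herm: "hermitian_mat A \<Longrightarrow> A$i$j = cnj (A$j$i)"
  unfolding hermitian_mat_def by blast

lemma psd_zero_diag:
  assumes psd: "psd_mat A" and d: "A$j$j = 0"
  shows "A$i$j = 0"
proof (rule ccontr)
  assume z: "A$i$j \<noteq> 0"
  have H: "hermitian_mat A" and Q: "\<And>x. qf A x x \<ge> 0" using psd unfolding psd_qf by auto
  define t where "t = - (A$i$i + 1) / (2 * A$i$j)"
  define x where "x = axis i 1 + t *s axis j 1"
  have tz: "t * A$i$j = - (A$i$i + 1) / 2" using z unfolding t_def by (simp add: field_simps)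
  have "qf A x x = A$i$i + t * A$i$j + cnj t * A$j$i + cnj t * t * A$j$j"
    unfolding x_def by (simp add: qf_add_left qf_add_right qf_scale_left qf_scale_right qf_axis_both algebra_simps)
  also have "\<dots> = A$i$i + t * A$i$j + cnj (t * A$i$j)"
    using d herm[OF H, of j i] by simp
  also have "\<dots> = A$i$i + (- (A$i$i + 1) / 2) + cnj (- (A$i$i + 1) / 2)"
    by (simp only: tz)
  finally have "Re (qf A x x) = -1" by simp
  moreover have "Re (qf A x x) \<ge> 0" using Q[of x] by (simp add: less_eq_complex_def)
  ultimately show False by simp
qed

lemma psd_step:
  assumes psd: "psd_mat A" and nz: "A$i$i \<noteq> 0"
  obtains v where "psd_mat (A - outer v)" "(A - outer v)$i$i = 0"
    "\<And>j. A$j$j = 0 \<Longrightarrow> (A - outer v)$j$j = 0"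
proof -
  have H: "hermitian_mat A" and Q: "\<And>x. qf A x x \<ge> 0" using psd unfolding psd_qf by auto
  have "A$i$i \<ge> 0" by (rule psd_diag[OF psd])
  then obtain r where r: "A$i$i = complex_of_real r" "r \<ge> 0"
    by (intro that[of "Re (A$i$i)"]) (auto simp: less_eq_complex_def complex_eq_iff)
  with nz have rpos: "r > 0" by auto
  define sq where "sq = sqrt r"
  have sqpos: "sq > 0" and sq2: "sq * sq = r" using rpos unfolding sq_def by auto
  define v where "v = (\<chi> k. A$k$i / complex_of_real sq)"
  define A' where "A' = A - outer v"
  have A'e: "A'$k$l = A$k$l - A$k$i * cnj (A$l$i) / complex_of_real r" for k l
  proof -
    have "complex_of_real sq * complex_of_real sq = complex_of_real r" using sq2
      by (metis of_real_mult)
    moreover have "(A - outer v)$k$l = A$k$l - A$k$i * cnj (A$l$i) / (complex_of_real sq * complex_of_real sq)"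
      unfolding v_def outer_def by (simp add: times_divide_times_eq)
    ultimately show ?thesis unfolding A'_def by simp
  qed
  have HA': "hermitian_mat A'"
    unfolding hermitian_mat_def A'e
  proof (intro allI)
    fix k l
    show "A $ k $ l - A $ k $ i * cnj (A $ l $ i) / complex_of_real r =
      cnj (A $ l $ k - A $ l $ i * cnj (A $ k $ i) / complex_of_real r)"
      using herm[OF H, of k l] by simp
  qed
  have QA': "qf A' x x \<ge> 0" for x
  proof -
    define w where "w = qf A (axis i 1) x"
    define s where "s = w / complex_of_real r"
    have cw: "qf A x (axis i 1) = cnj w"
    proof -
      have hc: "\<And>j. cnj (A$i$j) = A$j$i" by (metis herm[OF H] complex_cnj_cnj)
      show ?thesis unfolding w_def qf_axis_left qf_axis_right cnj_sum by (simp add: hc mult.commute)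
    qed
    have ipv: "ip v x = w / complex_of_real sq"
    proof -
      have hc: "\<And>k. cnj (A$k$i) = A$i$k" by (metis herm[OF H] complex_cnj_cnj)
      show ?thesis unfolding ip_def v_def w_def qf_axis_left
        by (simp add: hc sum_divide_distrib)
    qed
    have "qf A' x x = qf A x x - cnj w * w / complex_of_real r"
    proof -
      have "complex_of_real sq * complex_of_real sq = complex_of_real r" using sq2
        by (metis of_real_mult)
      then show ?thesis
      unfolding A'_def qf_mat_diff qf_outer ipv using sqpos by (simp add: field_simps)
    qed
    also have "\<dots> = qf A (x - s *s axis i 1) (x - s *s axis i 1)"
      unfolding qf_diff_left qf_diff_right qf_scale_left qf_scale_right qf_axis_both cw
      using rpos unfolding s_def w_def r(1) by (simp add: field_simps)
    also have "\<dots> \<ge> 0" by (rule Q)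
    finally show ?thesis .
  qed
  show ?thesis
  proof (rule that[of v])
    show "psd_mat (A - outer v)" using HA' QA' unfolding psd_qf A'_def by blast
    show "(A - outer v)$i$i = 0" using A'e[of i i] r rpos unfolding A'_def
      by (simp add: field_simps)
    fix j assume "A$j$j = 0"
    then have "A$i$j = 0" by (rule psd_zero_diag[OF psd])
    then show "(A - outer v)$j$j = 0" using A'e[of j j] \<open>A$j$j = 0\<close> herm[OF H, of j i]
      unfolding A'_def by simp
  qed
qed

lemma psd_decomp:
  "psd_mat A \<Longrightarrow> \<exists>(a::nat \<Rightarrow> complex^'n) p. A = (\<Sum>k<p. outer (a k))"
proof (induction "card {i. A$i$i \<noteq> 0}" arbitrary: A rule: less_induct)
  case less
  show ?case
  proof (cases "{i. A$i$i \<noteq> 0} = {}")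
    case True
    then have "A = 0" using psd_zero_diag[OF less.prems] by (auto simp: vec_eq_iff)
    then show ?thesis by (intro exI[of _ "\<lambda>_. 0"] exI[of _ 0]) simp
  next
    case False
    then obtain i where i: "A$i$i \<noteq> 0" by auto
    obtain v where v: "psd_mat (A - outer v)" "(A - outer v)$i$i = 0"
      "\<And>j. A$j$j = 0 \<Longrightarrow> (A - outer v)$j$j = 0"
      using psd_step[OF less.prems i] by blast
    have sub: "{j. (A - outer v)$j$j \<noteq> 0} \<subseteq> {j. A$j$j \<noteq> 0} - {i}"
      using v by auto
    have "card {j. (A - outer v)$j$j \<noteq> 0} < card {j. A$j$j \<noteq> 0}"
    proof -
      have "card ({j. A$j$j \<noteq> 0} - {i}) < card {j. A$j$j \<noteq> 0}"
        by (rule card_Diff1_less) (use i in auto)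
      then show ?thesis using card_mono[OF _ sub] by simp
    qed
    then have "\<exists>(a::nat \<Rightarrow> complex^'n) p. A - outer v = (\<Sum>k<p. outer (a k))"
      by (rule less.hyps[OF _ v(1)])
    then obtain a and p :: nat where ap: "A - outer v = (\<Sum>k<p. outer (a k))"
      by blast
    have "A = (\<Sum>k<Suc p. outer ((a(p:=v)) k))"
    proof -
      have "(\<Sum>k<p. outer ((a(p:=v)) k)) = (\<Sum>k<p. outer (a k))" by (rule sum.cong) auto
      then show ?thesis using ap by (simp add: algebra_simps)
    qed
    then show ?thesis by blast
  qed
qed


lemma finite_funs: "finite K \<Longrightarrow> finite {f::'n::finite \<Rightarrow> 'k. \<forall>i. f i \<in> K}"
  using finite_set_of_finite_funs[of "UNIV::'n set" K undefined] by simp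

lemma main_aux:
  fixes A B C :: "complex ^'n ^'n"
  assumes "psd_mat A" and "psd_mat B" and "psd_mat C"
  shows "det (A + B + C) + det C \<ge> det (A + C) + det (B + C)"
proof -
  obtain a and p :: nat where a: "A = (\<Sum>k<p. outer (a k))" using psd_decomp[OF assms(1)] by blast
  obtain b and q :: nat where b: "B = (\<Sum>k<q. outer (b k))" using psd_decomp[OF assms(2)] by blast
  obtain c and r :: nat where c: "C = (\<Sum>k<r. outer (c k))" using psd_decomp[OF assms(3)] by blast
  define w where "w = (\<lambda>(m::nat,k). if m = 0 then a k else if m = 1 then b k else c k)"
  define KA where "KA = (\<lambda>k. (0::nat,k)) ` {..<p}"
  define KB where "KB = (\<lambda>k. (1::nat,k)) ` {..<q}"
  define KC where "KC = (\<lambda>k. (2::nat,k)) ` {..<r}"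
  have fin: "finite KA" "finite KB" "finite KC" unfolding KA_def KB_def KC_def by auto
  have disj: "KA \<inter> KB = {}" "KA \<inter> KC = {}" "KB \<inter> KC = {}"
    unfolding KA_def KB_def KC_def by auto
  define M where "M K = (\<Sum>x\<in>K. outer (w x))" for K
  have hA: "A = M KA" unfolding a M_def KA_def
    by (subst sum.reindex) (auto simp: inj_on_def w_def)
  have hB: "B = M KB" unfolding b M_def KB_def
    by (subst sum.reindex) (auto simp: inj_on_def w_def)
  have hC: "C = M KC" unfolding c M_def KC_def
    by (subst sum.reindex) (auto simp: inj_on_def w_def)
  have un: "M (K1 \<union> K2) = M K1 + M K2" if "finite K1" "finite K2" "K1 \<inter> K2 = {}" for K1 K2
    unfolding M_def by (rule sum.union_disjoint[OF that])
  have ABC: "A + B + C = M (KA \<union> KB \<union> KC)"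
    using fin disj by (simp add: hA hB hC un Int_Un_distrib2)
  have AC: "A + C = M (KA \<union> KC)" using fin disj by (simp add: hA hC un)
  have BC: "B + C = M (KB \<union> KC)" using fin disj by (simp add: hB hC un)
  define F where "F K = {f::'n \<Rightarrow> nat \<times> nat. \<forall>i. f i \<in> K}" for K
  define h where "h f = det (\<chi> i. w (f i)) * cnj (det (\<chi> i. w (f i)))" for f :: "'n \<Rightarrow> nat \<times> nat"
  define N where "N = (of_nat (fact CARD('n)) :: complex)"
  have g: "N * det (M K) = sum h (F K)" if "finite K" for K
    unfolding N_def M_def F_def h_def by (rule gram_det[OF that])
  have finF: "finite (F K)" if "finite K" for K unfolding F_def using finite_funs[OF that] .
  have hpos: "h f \<ge> 0" for f
    unfolding h_def complex_norm_square[symmetric] by (simp add: less_eq_complex_def)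
  let ?all = "F (KA \<union> KB \<union> KC)"
  let ?U = "F (KA \<union> KC) \<union> F (KB \<union> KC)"
  have int: "F (KA \<union> KC) \<inter> F (KB \<union> KC) = F KC"
    using disj unfolding F_def by blast
  have subU: "?U \<subseteq> ?all" unfolding F_def by blast
  have s1: "sum h ?U + sum h (F KC) = sum h (F (KA \<union> KC)) + sum h (F (KB \<union> KC))"
    using sum.union_inter[of "F (KA \<union> KC)" "F (KB \<union> KC)" h] fin finF int by simp
  have s2: "sum h ?all = sum h (?all - ?U) + sum h ?U"
    by (rule sum.subset_diff[OF subU]) (use fin finF in simp)
  have key: "N * ((det (A + B + C) + det C) - (det (A + C) + det (B + C))) = sum h (?all - ?U)"
  proof -
    have e1: "N * det (A + B + C) = sum h ?all" unfolding ABC using fin by (intro g) auto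
    have e2: "N * det (A + C) = sum h (F (KA \<union> KC))" unfolding AC using fin by (intro g) auto
    have e3: "N * det (B + C) = sum h (F (KB \<union> KC))" unfolding BC using fin by (intro g) auto
    have e4: "N * det C = sum h (F KC)" unfolding hC using fin by (intro g) auto
    have s1': "sum h ?U = sum h (F (KA \<union> KC)) + sum h (F (KB \<union> KC)) - sum h (F KC)"
      using s1 by (simp add: eq_diff_eq)
    have "N * ((det (A + B + C) + det C) - (det (A + C) + det (B + C)))
       = N * det (A + B + C) + N * det C - N * det (A + C) - N * det (B + C)"
      by (simp add: algebra_simps)
    also have "\<dots> = sum h ?all + sum h (F KC) - sum h (F (KA \<union> KC)) - sum h (F (KB \<union> KC))"
      unfolding e1 e2 e3 e4 ..
    also have "\<dots> = sum h (?all - ?U)" unfolding s2 s1' by (simp add: algebra_simps)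
    finally show ?thesis .
  qed
  have nn: "sum h (?all - ?U) \<ge> 0" by (rule sum_nonneg) (use hpos in auto)
  have Npos: "N = complex_of_real (real (fact CARD('n)))" "real (fact CARD('n)) > 0"
    unfolding N_def by auto
  have "(det (A + B + C) + det C) - (det (A + C) + det (B + C)) = sum h (?all - ?U) / N"
    using key Npos by (simp add: field_simps)
  also have "\<dots> \<ge> 0"
  proof -
    define n where "n = real (fact CARD('n))"
    have n: "N = complex_of_real n" "n > 0" using Npos unfolding n_def by auto
    have "Re (sum h (?all - ?U)) \<ge> 0" "Im (sum h (?all - ?U)) = 0"
      using nn unfolding less_eq_complex_def by auto
    then show ?thesis unfolding n(1) less_eq_complex_def Re_divide_of_real Im_divide_of_real
      using n(2) by simp
  qed
  finally show ?thesis by simp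
qed

theorem mainTheorem5:
  fixes A B C :: "complex ^'n ^'n"
  assumes "psd_mat A" and "psd_mat B" and "psd_mat C"
  shows "det (A + B + C) + det C \<ge> det (A + C) + det (B + C)"
  using main_aux[OF assms] .

end
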